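(* Let $n\ge3$ and $x^\Lambda\partial_k\in\mathcal{B}$. If $\mathrm{lev}_i(x^\Lambda\partial_k)\le i$ for some integer $i\ge-1$, then $\mathrm{lev}_{i+(n-1)}(x^\Lambda\partial_k)\le i+(n-1)$. In particular, for every integer $h$: $\mathrm{lev}_i(x^\Lambda\partial_k)>i$ for all integers $i$ with $-1\le i\le h(n-1)$ if and only if $\mathrm{lev}_i(x^\Lambda\partial_k)>i$ for all integers $i\ge -1$ with $(h-1)(n-1)+1\le i\le h(n-1)$.
   Context: Fix an integer $n\ge 3$. A partition is a sequence $\Lambda=(\lambda_j)_{j\ge1}$ of non-negative integers with finite support; $\mathrm{wt}(\Lambda)=\sum_j j\lambda_j$; $\mathrm{Part}(k)$ is the set of partitions with $\lambda_j=0$ for $j>k$. Write $x^\Lambda=\prod_j x_j^{\lambda_j}$, $\deg(x^\Lambda)=\sum_j\lambda_j$. $\mathcal{B}=\{x^\Lambda\partial_k : 1\le k\le n,\ \Lambda\in\mathrm{Part}(k-1)\}$. For an integer $i\ge-1$, let $r_i\in\{1,\dots,n-1\}$ with $i\equiv r_i\pmod{n-1}$ and $h_i=\lfloor (i-1)/(n-1)\rfloor+1$. Define $\mathrm{WD}(x^\Lambda\partial_k)=\mathrm{wt}(\Lambda)-\deg(x^\Lambda)+n-k$ and $\mathrm{lev}_i(x^\Lambda\partial_k)=h_i\,\mathrm{WD}(x^\Lambda\partial_k)+\deg(x^\Lambda)-1$ (defined for integers $i\ge-1$). *)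

theory Defs
  imports Main
begin

text \<open>A partition is a function Lambda :: nat => nat (Lambda j = lambda_j, j >= 1),
  with Lambda 0 = 0 and finite support.  Part k: lambda_j = 0 for j > k.\<close>

definition Part :: "nat \<Rightarrow> (nat \<Rightarrow> nat) set" where
  "Part k = {L. \<forall>j. (j = 0 \<or> k < j) \<longrightarrow> L j = 0}"

definition wt :: "(nat \<Rightarrow> nat) \<Rightarrow> nat" where
  "wt L = (\<Sum>j\<in>{j. L j \<noteq> 0}. j * L j)"

definition deg :: "(nat \<Rightarrow> nat) \<Rightarrow> nat" where
  "deg L = (\<Sum>j\<in>{j. L j \<noteq> 0}. L j)"

text \<open>The basis B: pairs (Lambda, k) standing for x^Lambda d_k.\<close>
definition basisB :: "nat \<Rightarrow> ((nat \<Rightarrow> nat) \<times> nat) set" where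
  "basisB n = {(L, k). 1 \<le> k \<and> k \<le> n \<and> L \<in> Part (k - 1)}"

definition hh :: "nat \<Rightarrow> int \<Rightarrow> int" where
  "hh n i = (i - 1) div (int n - 1) + 1"

definition WD :: "nat \<Rightarrow> (nat \<Rightarrow> nat) \<Rightarrow> nat \<Rightarrow> int" where
  "WD n L k = int (wt L) - int (deg L) + int n - int k"

definition lev :: "nat \<Rightarrow> int \<Rightarrow> (nat \<Rightarrow> nat) \<Rightarrow> nat \<Rightarrow> int" where
  "lev n i L k = hh n i * WD n L k + int (deg L) - 1"

end

theory Submission
  imports Defs
begin

lemma hh_shift:
  assumes "n \<ge> 3"
  shows "hh n (i + (int n - 1)) = hh n i + 1"
proof -
  have m: "int n - 1 > 0" using assms by simp
  have "(i + (int n - 1) - 1) div (int n - 1) = ((i - 1) + 1 * (int n - 1)) div (int n - 1)"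
    by (simp add: algebra_simps)
  also have "\<dots> = (i - 1) div (int n - 1) + 1" using m by (simp only: div_mult_self1)
  finally show ?thesis unfolding hh_def by simp
qed

lemma negdiv: fixes a :: int assumes "a > 0" shows "(-a) div a = -1"
  using assms by (simp add: zdiv_zminus1_eq_if)

lemma hh_nonneg:
  assumes "n \<ge> 3" "i \<ge> -1"
  shows "hh n i \<ge> 0"
proof -
  have m: "int n - 1 \<ge> 2" using assms by simp
  have "(i - 1) div (int n - 1) \<ge> (-(int n - 1)) div (int n - 1)"
    using assms m by (intro zdiv_mono1) auto
  moreover have "(-(int n - 1)) div (int n - 1) = -1"
    using m negdiv[of "int n - 1"] by linarith
  ultimately show ?thesis unfolding hh_def by simp
qed

lemma hh_zero:
  assumes "n \<ge> 3" "i \<ge> -1" "hh n i = 0"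
  shows "i \<le> 0"
proof (rule ccontr)
  assume "\<not> i \<le> 0"
  hence "(i - 1) div (int n - 1) \<ge> 0 div (int n - 1)" using assms by (intro zdiv_mono1) auto
  thus False using assms(3) unfolding hh_def by simp
qed

lemma hh_upper:
  assumes "n \<ge> 3"
  shows "i \<le> hh n i * (int n - 1)"
proof -
  have m: "int n - 1 > 0" using assms by simp
  have "i - 1 < ((i - 1) div (int n - 1) + 1) * (int n - 1)"
  proof -
    have "i - 1 = (i - 1) div (int n - 1) * (int n - 1) + (i - 1) mod (int n - 1)" by (rule div_mult_mod_eq[symmetric])
    moreover have "(i - 1) mod (int n - 1) < int n - 1" using m by simp
    ultimately show ?thesis by (simp add: algebra_simps)
  qed
  thus ?thesis unfolding hh_def by simp
qed

lemma hh_lower: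
  assumes "n \<ge> 3"
  shows "(hh n i - 1) * (int n - 1) < i"
proof -
  have m: "int n - 1 > 0" using assms by simp
  have "(i - 1) div (int n - 1) * (int n - 1) \<le> i - 1"
  proof -
    have "i - 1 = (i - 1) div (int n - 1) * (int n - 1) + (i - 1) mod (int n - 1)" by (rule div_mult_mod_eq[symmetric])
    moreover have "(i - 1) mod (int n - 1) \<ge> 0" using m by simp
    ultimately show ?thesis by linarith
  qed
  thus ?thesis unfolding hh_def by simp
qed

lemma wt_deg:
  assumes "(L, k) \<in> basisB n"
  shows "deg L \<le> wt L \<and> wt L \<le> (k - 1) * deg L"
proof -
  let ?S = "{j. L j \<noteq> 0}"
  have P: "\<And>j. j = 0 \<or> k - 1 < j \<Longrightarrow> L j = 0"
    using assms by (auto simp add: basisB_def Part_def)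
  have sub: "\<And>j. j \<in> ?S \<Longrightarrow> 1 \<le> j \<and> j \<le> k - 1"
  proof -
    fix j assume "j \<in> ?S"
    hence "L j \<noteq> 0" by simp
    hence "\<not> (j = 0 \<or> k - 1 < j)" using P by metis
    thus "1 \<le> j \<and> j \<le> k - 1" by linarith
  qed
  have "deg L \<le> wt L" unfolding deg_def wt_def
  proof (rule sum_mono)
    fix j assume "j \<in> ?S" hence "j \<ge> 1" using sub by blast
    thus "L j \<le> j * L j" by simp
  qed
  moreover have "wt L \<le> (\<Sum>j\<in>?S. (k-1) * L j)" unfolding wt_def
  proof (rule sum_mono)
    fix j assume "j \<in> ?S" hence "j \<le> k - 1" using sub by blast
    thus "j * L j \<le> (k-1) * L j" by simp
  qed
  moreover have "(\<Sum>j\<in>?S. (k-1) * L j) = (k-1) * deg L" unfolding deg_def by (simp add: sum_distrib_left)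
  ultimately show ?thesis by simp
qed

lemma part1:
  assumes "n \<ge> 3" and B: "(L, k) \<in> basisB n" and "i \<ge> -1" and le: "lev n i L k \<le> i"
  shows "lev n (i + (int n - 1)) L k \<le> i + (int n - 1)"
proof -
  have k: "1 \<le> k" "k \<le> n" using B by (auto simp: basisB_def)
  have wd: "deg L \<le> wt L" "wt L \<le> (k - 1) * deg L" using wt_deg[OF B] by auto
  have shift: "lev n (i + (int n - 1)) L k = lev n i L k + WD n L k"
    unfolding lev_def hh_shift[OF assms(1)] by (simp add: algebra_simps)
  have WDle: "WD n L k \<le> int n - 1"
  proof (cases "deg L \<le> 1")
    case True
    then consider "deg L = 0" | "deg L = 1" by linarith
    thus ?thesis
    proof cases
      case 1 thus ?thesis using wd k unfolding WD_def by simp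
    next
      case 2
      hence "wt L \<le> k - 1" using wd by simp
      hence "int (wt L) \<le> int k - 1" using k by linarith
      thus ?thesis using 2 k unfolding WD_def by simp
    qed
  next
    case False
    have h0: "hh n i \<ge> 0" using hh_nonneg assms by auto
    have h1: "hh n i \<noteq> 0"
    proof
      assume "hh n i = 0"
      hence "i \<le> 0" using hh_zero assms by auto
      with le `hh n i = 0` False show False unfolding lev_def by simp
    qed
    have "hh n i * WD n L k + int (deg L) - 1 \<le> hh n i * (int n - 1)"
      using le hh_upper[OF assms(1), of i] unfolding lev_def by simp
    hence "hh n i * (WD n L k - (int n - 1)) < 0" using False by (simp add: algebra_simps)
    thus ?thesis using h0 h1 by (simp add: mult_less_0_iff)
  qed
  show ?thesis using shift WDle le by simp
qed

theorem lemma2p6: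
  fixes n :: nat and L :: "nat \<Rightarrow> nat" and k :: nat
  assumes "n \<ge> 3" and "(L, k) \<in> basisB n"
  shows "(\<forall>i::int. i \<ge> -1 \<longrightarrow> lev n i L k \<le> i \<longrightarrow>
            lev n (i + (int n - 1)) L k \<le> i + (int n - 1))
     \<and> (\<forall>h::int.
          (\<forall>i::int. -1 \<le> i \<and> i \<le> h * (int n - 1) \<longrightarrow> lev n i L k > i)
          \<longleftrightarrow>
          (\<forall>i::int. -1 \<le> i \<and> (h - 1) * (int n - 1) + 1 \<le> i \<and> i \<le> h * (int n - 1)
               \<longrightarrow> lev n i L k > i))"
proof (intro conjI allI impI iffI)
  fix i :: int assume "i \<ge> -1" "lev n i L k \<le> i"
  thus "lev n (i + (int n - 1)) L k \<le> i + (int n - 1)" using part1 assms by blast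
next
  fix h :: int and i
  assume "\<forall>i. -1 \<le> i \<and> i \<le> h * (int n - 1) \<longrightarrow> i < lev n i L k"
    "-1 \<le> i \<and> (h - 1) * (int n - 1) + 1 \<le> i \<and> i \<le> h * (int n - 1)"
  thus "i < lev n i L k" by auto
next
  fix h :: int and i
  assume H: "\<forall>i. -1 \<le> i \<and> (h - 1) * (int n - 1) + 1 \<le> i \<and> i \<le> h * (int n - 1)
               \<longrightarrow> i < lev n i L k"
    and i: "-1 \<le> i \<and> i \<le> h * (int n - 1)"
  let ?m = "int n - 1"
  have m: "?m \<ge> 2" using assms by simp
  have "\<forall>i. -1 \<le> i \<and> i \<le> h * ?m \<and> nat (h * ?m - i) < d \<longrightarrow> i < lev n i L k" for d
  proof (induction d)
    case 0 thus ?case by simp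
  next
    case (Suc d)
    show ?case
    proof (intro allI impI)
      fix j assume j: "-1 \<le> j \<and> j \<le> h * ?m \<and> nat (h * ?m - j) < Suc d"
      show "j < lev n j L k"
      proof (cases "(h - 1) * ?m + 1 \<le> j")
        case True thus ?thesis using H j by auto
      next
        case False
        hence "j + ?m \<le> h * ?m" by (simp add: algebra_simps)
        moreover have "h * ?m - j < int (Suc d)" using j by linarith
        hence "nat (h * ?m - (j + ?m)) < d" using j m \<open>j + ?m \<le> h * ?m\<close> by linarith
        moreover have "-1 \<le> j + ?m" using j m by linarith
        ultimately have "j + ?m < lev n (j + ?m) L k" using Suc.IH by blast
        thus ?thesis using part1[OF assms, of j] j by fastforce
      qed
    qed
  qed
  thus "i < lev n i L k" using i by blast
qed

end
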